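(* Let $G$ be a connected graph. Then $\mathrm{lpt}(G)\le \max |C^*|$, where the maximum is taken over all bonds $C^*$ of $G$.
   Context: All graphs are finite, simple and undirected. $\mathrm{lpt}(G)$ denotes the minimum size of a set of vertices of $G$ that intersects (shares a vertex with) every longest path of $G$. A bond of $G$ is a minimal nonempty edge-cut, where an edge-cut is a set of edges of the form $\{xy\in E(G): x\in X, y\in V(G)\setminus X\}$ for some $X\subseteq V(G)$; $|C^*|$ is the number of edges of the bond $C^*$. *)

theory Defs
  imports Main
begin

definition simple_graph :: "'a set \<Rightarrow> 'a set set \<Rightarrow> bool" where
  "simple_graph V E \<longleftrightarrow> finite V \<and>
     (\<forall>e\<in>E. \<exists>x y. x \<in> V \<and> y \<in> V \<and> x \<noteq> y \<and> e = {x, y})"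

definition is_path :: "'a set \<Rightarrow> 'a set set \<Rightarrow> 'a list \<Rightarrow> bool" where
  "is_path V E p \<longleftrightarrow> p \<noteq> [] \<and> distinct p \<and> set p \<subseteq> V \<and>
     (\<forall>i. Suc i < length p \<longrightarrow> {p ! i, p ! Suc i} \<in> E)"

definition longest_path :: "'a set \<Rightarrow> 'a set set \<Rightarrow> 'a list \<Rightarrow> bool" where
  "longest_path V E p \<longleftrightarrow> is_path V E p \<and>
     (\<forall>q. is_path V E q \<longrightarrow> length q \<le> length p)"

definition connected_graph :: "'a set \<Rightarrow> 'a set set \<Rightarrow> bool" where
  "connected_graph V E \<longleftrightarrow> V \<noteq> {} \<and>
     (\<forall>u\<in>V. \<forall>v\<in>V. \<exists>p. is_path V E p \<and> hd p = u \<and> last p = v)"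

definition lpt :: "'a set \<Rightarrow> 'a set set \<Rightarrow> nat" where
  "lpt V E = Min {card S | S. S \<subseteq> V \<and>
     (\<forall>p. longest_path V E p \<longrightarrow> set p \<inter> S \<noteq> {})}"

definition edge_cut :: "'a set \<Rightarrow> 'a set set \<Rightarrow> 'a set \<Rightarrow> 'a set set" where
  "edge_cut V E X = {e \<in> E. \<exists>x y. x \<in> X \<and> y \<in> V - X \<and> e = {x, y}}"

definition is_edge_cut :: "'a set \<Rightarrow> 'a set set \<Rightarrow> 'a set set \<Rightarrow> bool" where
  "is_edge_cut V E C \<longleftrightarrow> (\<exists>X. X \<subseteq> V \<and> C = edge_cut V E X)"

definition is_bond :: "'a set \<Rightarrow> 'a set set \<Rightarrow> 'a set set \<Rightarrow> bool" where
  "is_bond V E C \<longleftrightarrow> is_edge_cut V E C \<and> C \<noteq> {} \<and>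
     (\<forall>D. is_edge_cut V E D \<and> D \<noteq> {} \<and> D \<subseteq> C \<longrightarrow> D = C)"

end

theory Submission
  imports Defs
begin


definition conn :: "'a set set \<Rightarrow> 'a set \<Rightarrow> bool" where
  "conn E W \<longleftrightarrow> W \<noteq> {} \<and>
     (\<forall>A. A \<subseteq> W \<and> A \<noteq> {} \<and> A \<noteq> W \<longrightarrow> (\<exists>a\<in>A. \<exists>b\<in>W - A. {a, b} \<in> E))"

lemma path_iff:
  "is_path V E p \<longleftrightarrow> p \<noteq> [] \<and> distinct p \<and> set p \<subseteq> V \<and> successively (\<lambda>x y. {x, y} \<in> E) p"
  unfolding is_path_def successively_conv_nth by blast

lemma succ_cross:
  assumes "successively (\<lambda>x y. {x, y} \<in> E) p" "a \<in> set p" "a \<in> A" "b \<in> set p" "b \<notin> A"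
  shows "\<exists>x y. x \<in> A \<and> y \<notin> A \<and> x \<in> set p \<and> y \<in> set p \<and> {x, y} \<in> E"
  using assms
proof (induction p arbitrary: a b)
  case Nil
  then show ?case by simp
next
  case (Cons z p)
  show ?case
  proof (cases p)
    case Nil
    then show ?thesis using Cons by auto
  next
    case (Cons w p')
    have e: "{z, w} \<in> E" and sp: "successively (\<lambda>x y. {x, y} \<in> E) p"
      using Cons.prems(1) Cons by auto
    show ?thesis
    proof (cases "(z \<in> A) = (w \<in> A)")
      case False
      then show ?thesis
      proof (cases "z \<in> A")
        case True
        then show ?thesis using False e Cons by auto
      next
        case f: False
        then have "{w, z} \<in> E" using e by (simp add: insert_commute)
        then show ?thesis using False f Cons by auto
      qed
    next
      case True
      have "\<exists>a' b'. a' \<in> set p \<and> a' \<in> A \<and> b' \<in> set p \<and> b' \<notin> A"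
        using Cons.prems True Cons by auto
      then obtain a' b' where "a' \<in> set p" "a' \<in> A" "b' \<in> set p" "b' \<notin> A" by blast
      from Cons.IH[OF sp this] show ?thesis by auto
    qed
  qed
qed

lemma path_conn: "is_path V E p \<Longrightarrow> conn E (set p)"
  unfolding conn_def path_iff
proof (intro conjI allI impI)
  fix A assume p: "p \<noteq> [] \<and> distinct p \<and> set p \<subseteq> V \<and> successively (\<lambda>x y. {x, y} \<in> E) p"
    and A: "A \<subseteq> set p \<and> A \<noteq> {} \<and> A \<noteq> set p"
  then obtain a b where "a \<in> A" "b \<in> set p" "b \<notin> A" by blast
  with succ_cross[of E p a A b] p A show "\<exists>a\<in>A. \<exists>b\<in>set p - A. {a, b} \<in> E" by blast
qed auto

lemma conn_V: "connected_graph V E \<Longrightarrow> conn E V"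
  unfolding conn_def
proof (intro conjI allI impI)
  fix A assume c: "connected_graph V E" and A: "A \<subseteq> V \<and> A \<noteq> {} \<and> A \<noteq> V"
  then obtain u v where uv: "u \<in> A" "v \<in> V" "v \<notin> A" by blast
  then obtain p where p: "is_path V E p" "hd p = u" "last p = v"
    using c A unfolding connected_graph_def by blast
  then have "u \<in> set p" "v \<in> set p" unfolding is_path_def by auto
  with succ_cross[of E p u A v] p uv obtain x y where
    "x \<in> A" "y \<notin> A" "y \<in> set p" "{x,y} \<in> E" unfolding path_iff by blast
  then show "\<exists>a\<in>A. \<exists>b\<in>V - A. {a, b} \<in> E" using p(1) unfolding is_path_def by blast
qed (auto simp: connected_graph_def)

lemma conn_insert:
  assumes "conn E W" "b \<notin> W" "w \<in> W" "{w, b} \<in> E"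
  shows "conn E (insert b W)"
  unfolding conn_def
proof (intro conjI allI impI)
  fix A assume A: "A \<subseteq> insert b W \<and> A \<noteq> {} \<and> A \<noteq> insert b W"
  show "\<exists>a\<in>A. \<exists>c\<in>insert b W - A. {a, c} \<in> E"
  proof (cases "A \<inter> W = {}")
    case True
    then have "A = {b}" using A by blast
    then show ?thesis using assms by (auto simp: insert_commute)
  next
    case False
    show ?thesis
    proof (cases "A \<inter> W = W")
      case True
      then have "b \<notin> A" using A by blast
      then show ?thesis using assms True by blast
    next
      case f: False
      then obtain a c where "a \<in> A \<inter> W" "c \<in> W - (A \<inter> W)" "{a, c} \<in> E"
        using assms(1) False unfolding conn_def by (metis Int_lower2)
      then show ?thesis by blast
    qed
  qed
qed simp

lemma conn_single: "conn E {y}"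
  unfolding conn_def by auto



lemma edge_cut_sym:
  assumes "X \<subseteq> V"
  shows "edge_cut V E (V - X) = edge_cut V E X"
proof -
  have "V - (V - X) = X" using assms by blast
  then have "edge_cut V E (V - X) = {e \<in> E. \<exists>x y. x \<in> V - X \<and> y \<in> X \<and> e = {x, y}}"
    unfolding edge_cut_def by simp
  also have "\<dots> = edge_cut V E X"
    unfolding edge_cut_def by (auto simp: insert_commute)
  finally show ?thesis .
qed

lemma bond_lemma:
  assumes sg: "simple_graph V E" and XV: "X \<subseteq> V" and cX: "conn E X" and cY: "conn E (V - X)"
    and cV: "conn E V"
  shows "is_bond V E (edge_cut V E X)"
proof -
  have ne: "edge_cut V E X \<noteq> {}"
  proof -
    have "X \<noteq> {}" "V - X \<noteq> {}" using cX cY unfolding conn_def by auto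
    then have "X \<noteq> V" by blast
    then obtain a b where "a \<in> X" "b \<in> V - X" "{a,b} \<in> E"
      using cV XV \<open>X \<noteq> {}\<close> unfolding conn_def by blast
    then show ?thesis unfolding edge_cut_def by blast
  qed
  have split: "W \<subseteq> Z \<or> W \<inter> Z = {}"
    if cW: "conn E W" and WV: "W \<subseteq> V" and noE: "\<And>a b. a \<in> W \<Longrightarrow> b \<in> W \<Longrightarrow> {a,b} \<notin> edge_cut V E X"
      and Z: "Z \<subseteq> V" and sub: "edge_cut V E Z \<subseteq> edge_cut V E X" for W Z
  proof (rule ccontr)
    assume "\<not> (W \<subseteq> Z \<or> W \<inter> Z = {})"
    then have "W \<inter> Z \<subseteq> W" "W \<inter> Z \<noteq> {}" "W \<inter> Z \<noteq> W" by auto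
    then obtain a b where ab: "a \<in> W \<inter> Z" "b \<in> W - W \<inter> Z" "{a,b} \<in> E"
      using cW unfolding conn_def by blast
    then have "{a,b} \<in> edge_cut V E Z" using WV unfolding edge_cut_def by blast
    then show False using sub noE ab by blast
  qed
  have noX: "{a,b} \<notin> edge_cut V E X" if "a \<in> X" "b \<in> X" for a b
    using that unfolding edge_cut_def by (auto simp: doubleton_eq_iff)
  have noY: "{a,b} \<notin> edge_cut V E X" if "a \<in> V - X" "b \<in> V - X" for a b
    using that unfolding edge_cut_def by (auto simp: doubleton_eq_iff)
  show ?thesis
    unfolding is_bond_def
  proof (intro conjI allI impI)
    show "is_edge_cut V E (edge_cut V E X)" unfolding is_edge_cut_def using XV by blast
    show "edge_cut V E X \<noteq> {}" by (rule ne)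
    fix D assume D: "is_edge_cut V E D \<and> D \<noteq> {} \<and> D \<subseteq> edge_cut V E X"
    then obtain Z where Z: "Z \<subseteq> V" "D = edge_cut V E Z" unfolding is_edge_cut_def by blast
    have s1: "X \<subseteq> Z \<or> X \<inter> Z = {}" using split[OF cX XV noX Z(1)] D Z by blast
    have s2: "V - X \<subseteq> Z \<or> (V - X) \<inter> Z = {}" using split[OF cY _ noY Z(1)] D Z by blast
    have e1: "edge_cut V E V = {}" "edge_cut V E {} = {}" unfolding edge_cut_def by auto
    show "D = edge_cut V E X"
    proof -
      { assume "X \<subseteq> Z" "V - X \<subseteq> Z" then have "Z = V" using Z by blast
        then have False using D Z e1 by simp }
      moreover
      { assume "X \<inter> Z = {}" "(V - X) \<inter> Z = {}" then have "Z = {}" using Z by blast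
        then have False using D Z e1 by simp }
      moreover
      { assume "X \<subseteq> Z" "(V - X) \<inter> Z = {}" then have "Z = X" using Z XV by blast
        then have ?thesis using Z by simp }
      moreover
      { assume "X \<inter> Z = {}" "V - X \<subseteq> Z" then have "Z = V - X" using Z XV by blast
        then have ?thesis using Z edge_cut_sym[OF XV] by simp }
      ultimately show ?thesis using s1 s2 by blast
    qed
  qed
qed



lemma connE: "conn E W \<Longrightarrow> A \<subseteq> W \<Longrightarrow> A \<noteq> {} \<Longrightarrow> A \<noteq> W \<Longrightarrow> \<exists>a\<in>A. \<exists>b\<in>W - A. {a,b} \<in> E"
  unfolding conn_def by blast
lemma conn_ne: "conn E W \<Longrightarrow> W \<noteq> {}"
  unfolding conn_def by blast

lemma ext_lemma:
  assumes fin: "finite V" and cV: "conn E V" and T0: "T0 \<subseteq> W" "W \<subseteq> V" "conn E T0"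
    and cW: "conn E (V - W)"
  shows "\<exists>X'. T0 \<subseteq> X' \<and> X' \<subseteq> W \<and> conn E X' \<and> conn E (V - X')"
proof -
  let ?P = "\<lambda>X'. T0 \<subseteq> X' \<and> X' \<subseteq> W \<and> conn E X'"
  have 1: "\<forall>y. ?P y \<longrightarrow> card y < card V + 1"
  proof (intro allI impI)
    fix y assume "?P y"
    then have "y \<subseteq> V" using T0 by blast
    then have "card y \<le> card V" using card_mono[OF fin] by blast
    then show "card y < card V + 1" by simp
  qed
  have 2: "?P T0" using T0 by simp
  have "\<exists>X'. ?P X' \<and> (\<forall>Y. ?P Y \<longrightarrow> card Y \<le> card X')"
    by (rule Lattices_Big.ex_has_greatest_nat[OF 2 1])
  then obtain X' where X': "?P X'" and mx: "\<And>Y. ?P Y \<Longrightarrow> card Y \<le> card X'"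
    by blast
  have "X' \<subseteq> V" using X' T0 by blast
  then have finX: "finite X'" using finite_subset fin by blast
  have VW: "V - W \<noteq> {}" using conn_ne[OF cW] .
  have claim: "\<exists>a\<in>B. \<exists>b\<in>(V - X') - B. {a,b} \<in> E" if B: "B \<subseteq> W - X'" "B \<noteq> {}" for B
  proof (rule ccontr)
    assume no: "\<not> ?thesis"
    have "B \<noteq> V" using VW B by blast
    moreover have "B \<subseteq> V" using B T0 by blast
    ultimately obtain a b where ab: "a \<in> B" "b \<in> V - B" "{a,b} \<in> E"
      using connE[OF cV _ B(2)] by blast
    have "b \<in> X'" using no ab by blast
    then have "{b,a} \<in> E" using ab by (simp add: insert_commute)
    have "a \<notin> X'" using ab B by blast
    have "conn E (insert a X')" using conn_insert[OF _ \<open>a \<notin> X'\<close> \<open>b \<in> X'\<close> \<open>{b,a} \<in> E\<close>] X' by blast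
    moreover have "insert a X' \<subseteq> W" using X' ab B by blast
    ultimately have "?P (insert a X')" using X' by blast
    then have "card (insert a X') \<le> card X'" by (rule mx)
    then show False using finX \<open>a \<notin> X'\<close> by simp
  qed
  have "conn E (V - X')"
    unfolding conn_def
  proof (intro conjI allI impI)
    show "V - X' \<noteq> {}" using VW X' by blast
    fix A assume A: "A \<subseteq> V - X' \<and> A \<noteq> {} \<and> A \<noteq> V - X'"
    show "\<exists>a\<in>A. \<exists>b\<in>V - X' - A. {a, b} \<in> E"
    proof (cases "A \<inter> (V - W) = {}")
      case True
      then have "A \<subseteq> W - X'" using A by blast
      then show ?thesis using claim A by blast
    next
      case False
      show ?thesis
      proof (cases "V - W \<subseteq> A")
        case True
        let ?B = "(V - X') - A"
        have "?B \<subseteq> W - X'" "?B \<noteq> {}" using True A by blast+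
        then obtain a b where ab: "a \<in> ?B" "b \<in> (V - X') - ?B" "{a,b} \<in> E" using claim by blast
        then have "{b,a} \<in> E" by (simp add: insert_commute)
        moreover have "b \<in> A" "a \<in> V - X' - A" using ab A by blast+
        ultimately show ?thesis by blast
      next
        case f: False
        have "A \<inter> (V - W) \<subseteq> V - W" "A \<inter> (V - W) \<noteq> {}" "A \<inter> (V - W) \<noteq> V - W"
          using False f by blast+
        then obtain a b where ab: "a \<in> A \<inter> (V - W)" "b \<in> (V - W) - A \<inter> (V - W)" "{a,b} \<in> E"
          using connE[OF cW] by blast
        moreover have "b \<in> V - X' - A" using ab X' by blast
        ultimately show ?thesis by blast
      qed
    qed
  qed
  then show ?thesis using X' by blast
qed



lemma prefix_lemma:
  "last (x # p) \<in> B \<Longrightarrow> x \<notin> B \<Longrightarrow>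
   \<exists>mid w rest. x # p = x # mid @ w # rest \<and> w \<in> B \<and> set mid \<inter> B = {}"
proof (induction p arbitrary: x)
  case Nil
  then show ?case by simp
next
  case (Cons y p)
  show ?case
  proof (cases "y \<in> B")
    case True
    then show ?thesis by (intro exI[of _ "[]"] exI[of _ y] exI[of _ p]) simp
  next
    case False
    have "last (y # p) \<in> B" using Cons.prems by simp
    from Cons.IH[OF this False] obtain mid w rest where
      "y # p = y # mid @ w # rest" "w \<in> B" "set mid \<inter> B = {}" by blast
    then show ?thesis using False
      by (intro exI[of _ "y # mid"] exI[of _ w] exI[of _ rest]) simp
  qed
qed

lemma bridge:
  "successively R p \<Longrightarrow> distinct p \<Longrightarrow> last p \<in> B \<Longrightarrow> a \<in> set p \<Longrightarrow> a \<in> A \<Longrightarrow> A \<inter> B = {} \<Longrightarrow>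
   \<exists>u mid w. u \<in> A \<and> w \<in> B \<and> set mid \<inter> (A \<union> B) = {} \<and> distinct (u # mid @ [w]) \<and>
     set (u # mid @ [w]) \<subseteq> set p \<and> successively R (u # mid @ [w])"
proof (induction p arbitrary: a)
  case Nil
  then show ?case by simp
next
  case (Cons x p)
  show ?case
  proof (cases "\<exists>a'\<in>set p. a' \<in> A")
    case True
    then obtain a' where a': "a' \<in> set p" "a' \<in> A" by blast
    then have "p \<noteq> []" by auto
    then have "successively R p" "distinct p" "last p \<in> B"
      using Cons.prems by (auto simp: successively_Cons)
    from Cons.IH[OF this a' Cons.prems(6)] obtain u mid w where
      "u \<in> A \<and> w \<in> B \<and> set mid \<inter> (A \<union> B) = {} \<and> distinct (u # mid @ [w]) \<and>
       set (u # mid @ [w]) \<subseteq> set p \<and> successively R (u # mid @ [w])" by blast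
    moreover have "set p \<subseteq> set (x # p)" by auto
    ultimately show ?thesis by blast
  next
    case False
    then have xA: "x \<in> A" using Cons.prems by auto
    then have xB: "x \<notin> B" using Cons.prems by auto
    from prefix_lemma[OF Cons.prems(3) xB] obtain mid w rest where
      mw: "x # p = x # mid @ w # rest" "w \<in> B" "set mid \<inter> B = {}" by blast
    have eq: "x # p = (x # mid @ [w]) @ rest" using mw(1) by simp
    have "set mid \<subseteq> set p" using mw(1) by auto
    then have "set mid \<inter> A = {}" using False by blast
    moreover have "distinct (x # mid @ [w])"
      using Cons.prems(2) unfolding eq distinct_append by blast
    moreover have "successively R (x # mid @ [w])"
      using Cons.prems(1) unfolding eq successively_append_iff by blast
    moreover have "set (x # mid @ [w]) \<subseteq> set (x # p)" unfolding eq by auto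
    ultimately show ?thesis using xA mw by blast
  qed
qed

lemma succ_take_drop:
  assumes "successively R P"
  shows "successively R (take n P)" "successively R (drop n P)"
  using assms successively_append_iff[of R "take n P" "drop n P"] by simp_all

lemma path_rev: "is_path V E p \<Longrightarrow> is_path V E (rev p)"
  unfolding path_iff by (simp add: insert_commute)

lemma piece:
  assumes P: "is_path V E P" and i: "i < length P"
  shows "\<exists>xs. is_path V E (xs @ [P ! i]) \<and> set (xs @ [P ! i]) \<subseteq> set P \<and>
             length P + 1 \<le> 2 * length (xs @ [P ! i])"
proof (cases "length P + 1 \<le> 2 * (i + 1)")
  case True
  have eq: "take (Suc i) P = take i P @ [P ! i]" using i by (simp add: take_Suc_conv_app_nth)
  have P': "P \<noteq> []" "distinct P" "set P \<subseteq> V" "successively (\<lambda>x y. {x, y} \<in> E) P"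
    using P unfolding path_iff by blast+
  have "is_path V E (take (Suc i) P)"
    unfolding path_iff
  proof (intro conjI)
    show "take (Suc i) P \<noteq> []" using P' by simp
    show "distinct (take (Suc i) P)" using P' by simp
    show "set (take (Suc i) P) \<subseteq> V" using P' set_take_subset[of "Suc i" P] by blast
    show "successively (\<lambda>x y. {x, y} \<in> E) (take (Suc i) P)" using succ_take_drop(1)[OF P'(4)] .
  qed
  then have 1: "is_path V E (take i P @ [P ! i])" unfolding eq .
  have 2: "set (take i P @ [P ! i]) \<subseteq> set P" unfolding eq[symmetric] by (rule set_take_subset)
  have 3: "length (take i P @ [P ! i]) = i + 1" using i by simp
  show ?thesis
    apply (rule exI[of _ "take i P"])
    using 1 2 3 True by simp
next
  case False
  have eq: "drop i P = P ! i # drop (Suc i) P" using i by (simp add: Cons_nth_drop_Suc)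
  have P': "P \<noteq> []" "distinct P" "set P \<subseteq> V" "successively (\<lambda>x y. {x, y} \<in> E) P"
    using P unfolding path_iff by blast+
  have "is_path V E (drop i P)"
    unfolding path_iff
  proof (intro conjI)
    show "drop i P \<noteq> []" using i by simp
    show "distinct (drop i P)" using P' by simp
    show "set (drop i P) \<subseteq> V" using P' set_drop_subset[of i P] by blast
    show "successively (\<lambda>x y. {x, y} \<in> E) (drop i P)" using succ_take_drop(2)[OF P'(4)] .
  qed
  then have "is_path V E (rev (drop i P))" by (rule path_rev)
  moreover have "rev (drop i P) = rev (drop (Suc i) P) @ [P ! i]" unfolding eq by simp
  ultimately have 1: "is_path V E (rev (drop (Suc i) P) @ [P ! i])" by simp
  have 2: "set (rev (drop (Suc i) P) @ [P ! i]) \<subseteq> set P"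
    using set_drop_subset[of "Suc i" P] nth_mem[OF i] by auto
  have 3: "length (rev (drop (Suc i) P) @ [P ! i]) = length P - i" using i by simp
  have 4: "length P + 1 \<le> 2 * (length P - i)" using False i by arith
  show ?thesis
    apply (rule exI[of _ "rev (drop (Suc i) P)"])
    using 1 2 3 4 by simp
qed

lemma glue: "successively R (as @ [u]) \<Longrightarrow> successively R (u # bs) \<Longrightarrow> successively R (as @ u # bs)"
  using successively_append_iff[of R as "u # bs"] successively_append_iff[of R as "[u]"] by auto

lemma join:
  assumes "is_path V E (xs @ [u])" "is_path V E (w # ys)"
    "set (xs @ [u]) \<inter> set (w # ys) = {}"
    "set mid \<inter> (set (xs @ [u]) \<union> set (w # ys)) = {}"
    "distinct (u # mid @ [w])" "set mid \<subseteq> V"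
    "successively (\<lambda>x y. {x, y} \<in> E) (u # mid @ [w])"
  shows "is_path V E (xs @ u # mid @ w # ys)"
proof -
  have s1: "successively (\<lambda>x y. {x, y} \<in> E) (xs @ u # mid @ [w])"
    using glue[of _ xs u "mid @ [w]"] assms(1,7) unfolding path_iff by simp
  have "successively (\<lambda>x y. {x, y} \<in> E) ((xs @ u # mid) @ w # ys)"
    using glue[of _ "xs @ u # mid" w ys] s1 assms(2) unfolding path_iff by simp
  then show ?thesis using assms unfolding path_iff by auto
qed


lemma path_take: "is_path V E P \<Longrightarrow> 0 < n \<Longrightarrow> is_path V E (take n P)"
  unfolding path_iff using succ_take_drop(1) set_take_subset[of n P]
  by (auto simp: distinct_take)

lemma intersect:
  assumes cg: "connected_graph V E" and P: "longest_path V E P" and Q: "longest_path V E Q"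
  shows "set P \<inter> set Q \<noteq> {}"
proof
  assume disj: "set P \<inter> set Q = {}"
  have PP: "is_path V E P" and QP: "is_path V E Q" using P Q unfolding longest_path_def by blast+
  have len: "length Q = length P" using P Q unfolding longest_path_def by (meson le_antisym)
  have "P \<noteq> []" "Q \<noteq> []" "set P \<subseteq> V" "set Q \<subseteq> V" using PP QP unfolding path_iff by blast+
  then have hPV: "hd P \<in> V" and hQV: "hd Q \<in> V" by auto
  obtain p where p: "is_path V E p" "hd p = hd P" "last p = hd Q"
    using cg hPV hQV unfolding connected_graph_def by blast
  have p': "p \<noteq> []" "distinct p" "set p \<subseteq> V" "successively (\<lambda>x y. {x, y} \<in> E) p"
    using p(1) unfolding path_iff by blast+
  have a1: "hd p \<in> set p" using p' by simp
  have a2: "hd p \<in> set P" using p(2) \<open>P \<noteq> []\<close> by simp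
  have a3: "last p \<in> set Q" using p(3) \<open>Q \<noteq> []\<close> by simp
  obtain u mid w where br: "u \<in> set P" "w \<in> set Q" "set mid \<inter> (set P \<union> set Q) = {}"
    "distinct (u # mid @ [w])" "set (u # mid @ [w]) \<subseteq> set p"
    "successively (\<lambda>x y. {x, y} \<in> E) (u # mid @ [w])"
    using bridge[OF p'(4) p'(2) a3 a1 a2 disj] by blast
  obtain i where i: "i < length P" "P ! i = u" using br(1) by (meson in_set_conv_nth)
  obtain j where j: "j < length Q" "Q ! j = w" using br(2) by (meson in_set_conv_nth)
  obtain xs where xs: "is_path V E (xs @ [P ! i])" "set (xs @ [P ! i]) \<subseteq> set P"
    "length P + 1 \<le> 2 * length (xs @ [P ! i])" using piece[OF PP i(1)] by blast
  obtain ys where ys: "is_path V E (ys @ [Q ! j])" "set (ys @ [Q ! j]) \<subseteq> set Q"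
    "length Q + 1 \<le> 2 * length (ys @ [Q ! j])" using piece[OF QP j(1)] by blast
  have ys1: "is_path V E (w # rev ys)" using path_rev[OF ys(1)] j by simp
  have ys2: "set (w # rev ys) \<subseteq> set Q" using ys(2) j by auto
  have xs1: "is_path V E (xs @ [u])" using xs(1) i by simp
  have xs2: "set (xs @ [u]) \<subseteq> set P" using xs(2) i by simp
  have midV: "set mid \<subseteq> V" using br(5) p' by auto
  have "is_path V E (xs @ u # mid @ w # rev ys)"
    apply (rule join[OF xs1 ys1])
    using xs2 ys2 disj br midV by blast+
  then have "length (xs @ u # mid @ w # rev ys) \<le> length P"
    using P unfolding longest_path_def by blast
  moreover have "length (xs @ u # mid @ w # rev ys) \<ge> length xs + length ys + 2" by simp
  ultimately show False using xs(3) ys(3) len by simp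
qed

definition good :: "'a set \<Rightarrow> 'a set set \<Rightarrow> 'a set \<Rightarrow> bool" where
  "good V E X \<longleftrightarrow> X \<subseteq> V \<and> conn E X \<and> conn E (V - X) \<and>
     (\<forall>Q. longest_path V E Q \<longrightarrow> set Q \<inter> X \<noteq> {})"

theorem corollary3:
  fixes V :: "'a set" and E :: "'a set set"
  assumes "simple_graph V E"
    and "connected_graph V E"
    and "E \<noteq> {}"
  shows "lpt V E \<le> Max {card C | C. is_bond V E C}"
proof -
  note sg = assms(1) and cg = assms(2)
  have fin: "finite V" using sg unfolding simple_graph_def by blast
  have EV: "E \<subseteq> Pow V"
  proof
    fix e assume "e \<in> E"
    then obtain a b where "a \<in> V" "b \<in> V" "e = {a, b}"
      using sg unfolding simple_graph_def by meson
    then show "e \<in> Pow V" by simp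
  qed
  have finE: "finite E" using EV fin by (meson finite_Pow_iff finite_subset)
  have cV: "conn E V" using conn_V[OF cg] .
  have Vne: "V \<noteq> {}" using cg unfolding connected_graph_def by blast
  then obtain v where v: "v \<in> V" by blast
  have pv: "is_path V E [v]" using v unfolding path_iff by simp
  have bnd: "\<forall>q. is_path V E q \<longrightarrow> length q < card V + 1"
  proof (intro allI impI)
    fix q assume "is_path V E q"
    then have "distinct q" "set q \<subseteq> V" unfolding path_iff by blast+
    then have "card (set q) \<le> card V" using card_mono[OF fin] by blast
    then show "length q < card V + 1" using distinct_card[OF \<open>distinct q\<close>] by simp
  qed
  have "\<exists>x. is_path V E x \<and> (\<forall>y. is_path V E y \<longrightarrow> length y \<le> length x)"
    by (rule Lattices_Big.ex_has_greatest_nat[OF pv bnd])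
  then obtain P0 where P0: "longest_path V E P0" unfolding longest_path_def by blast
  have P0p: "is_path V E P0" using P0 unfolding longest_path_def by blast
  have P0': "P0 \<noteq> []" "distinct P0" "set P0 \<subseteq> V" "successively (\<lambda>x y. {x, y} \<in> E) P0"
    using P0p unfolding path_iff by blast+
  obtain e where "e \<in> E" using assms(3) by blast
  then obtain x y where xy: "x \<in> V" "y \<in> V" "x \<noteq> y" "e = {x, y}"
    using sg unfolding simple_graph_def by meson
  then have xyE: "{x, y} \<in> E" using \<open>e \<in> E\<close> by simp
  have "is_path V E [x, y]" using xy xyE unfolding path_iff by simp
  then have len2: "2 \<le> length P0" using P0 unfolding longest_path_def by fastforce
  have lenall: "length Q = length P0" if "longest_path V E Q" for Q
    using that P0 unfolding longest_path_def by (meson le_antisym)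
  define yl where "yl = last P0"
  define T where "T = set (butlast P0)"
  have P0eq: "P0 = butlast P0 @ [yl]" using P0'(1) unfolding yl_def by simp
  have ylV: "yl \<in> V" using P0' unfolding yl_def using last_in_set by blast
  have ylT: "yl \<notin> T" using P0'(2) P0eq unfolding T_def
    by (metis distinct_append disjoint_iff list.set_intros(1))
  have setP0: "set P0 = insert yl T" unfolding T_def by (subst P0eq) auto
  have bP: "is_path V E (butlast P0)"
    using path_take[OF P0p, of "length P0 - 1"] len2 by (simp add: butlast_conv_take)
  have TW: "T \<subseteq> V - {yl}" using setP0 ylT P0'(3) by blast
  have VW: "V - (V - {yl}) = {yl}" using ylV by blast
  have cT: "conn E T" unfolding T_def by (rule path_conn[OF bP])
  have cVW: "conn E (V - (V - {yl}))" unfolding VW by (rule conn_single)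
  have "\<exists>X'. T \<subseteq> X' \<and> X' \<subseteq> V - {yl} \<and> conn E X' \<and> conn E (V - X')"
    by (rule ext_lemma[OF fin cV TW _ cT cVW]) blast
  then obtain X' where X': "T \<subseteq> X'" "X' \<subseteq> V - {yl}" "conn E X'" "conn E (V - X')"
    by blast
  have XVy: "X' = V - {yl}"
  proof (rule ccontr)
    assume "X' \<noteq> V - {yl}"
    then obtain z where z: "z \<in> V" "z \<noteq> yl" "z \<notin> X'" using X'(2) by blast
    have "{yl} \<subseteq> V - X'" "{yl} \<noteq> {}" "{yl} \<noteq> V - X'" using X'(2) ylV z by blast+
    then obtain b where b: "b \<in> V - X' - {yl}" "{yl, b} \<in> E"
      using connE[OF X'(4)] by blast
    have bP0: "b \<notin> set P0" using b X'(1) setP0 by blast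
    have "is_path V E (P0 @ [b])"
      unfolding path_iff using P0' bP0 b yl_def by (auto simp: successively_append_iff)
    then have "length (P0 @ [b]) \<le> length P0" using P0 unfolding longest_path_def by blast
    then show False by simp
  qed
  have good0: "good V E (V - {yl})"
    unfolding good_def
  proof (intro conjI allI impI)
    show "V - {yl} \<subseteq> V" by blast
    show "conn E (V - {yl})" using X'(3) XVy by simp
    show "conn E (V - (V - {yl}))" using VW conn_single by metis
    fix Q assume Q: "longest_path V E Q"
    show "set Q \<inter> (V - {yl}) \<noteq> {}"
    proof
      assume "set Q \<inter> (V - {yl}) = {}"
      moreover have "set Q \<subseteq> V" "distinct Q" using Q unfolding longest_path_def path_iff by blast+
      ultimately have "set Q \<subseteq> {yl}" by blast
      then have "card (set Q) \<le> card {yl}" by (intro card_mono) simp_all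
      then have "card (set Q) \<le> 1" by simp
      then show False using \<open>distinct Q\<close> lenall[OF Q] len2 distinct_card by fastforce
    qed
  qed
  have "\<exists>X. good V E X \<and> (\<forall>Y. good V E Y \<longrightarrow> card X \<le> card Y)"
    by (rule ex_has_least_nat[of "good V E", OF good0])
  then obtain X where gX: "good V E X" and minX: "\<And>Y. good V E Y \<Longrightarrow> card X \<le> card Y"
    by blast
  have XV: "X \<subseteq> V" and cX: "conn E X" and cY: "conn E (V - X)"
    and meet: "\<And>Q. longest_path V E Q \<Longrightarrow> set Q \<inter> X \<noteq> {}"
    using gX unfolding good_def by blast+
  define S where "S = {a \<in> X. \<exists>z\<in>V - X. {a, z} \<in> E}"
  have trans: "set P \<inter> S \<noteq> {}" if P: "longest_path V E P" for P
  proof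
    assume PS: "set P \<inter> S = {}"
    have Pp: "is_path V E P" using P unfolding longest_path_def by blast
    have P': "P \<noteq> []" "distinct P" "set P \<subseteq> V" "successively (\<lambda>x y. {x, y} \<in> E) P"
      using Pp unfolding path_iff by blast+
    have PX: "set P \<subseteq> X"
    proof (rule ccontr)
      assume "\<not> set P \<subseteq> X"
      then obtain b where b: "b \<in> set P" "b \<notin> X" by blast
      obtain a where a: "a \<in> set P" "a \<in> X" using meet[OF P] by blast
      obtain c d where "c \<in> X" "d \<notin> X" "c \<in> set P" "d \<in> set P" "{c, d} \<in> E"
        using succ_cross[OF P'(4) a(1) a(2) b] by blast
      then have "c \<in> S" using P'(3) unfolding S_def by blast
      then show False using PS \<open>c \<in> set P\<close> by blast
    qed
    have Xne: "X \<noteq> {}" using conn_ne[OF cX] .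
    have "V - X \<noteq> {}" using conn_ne[OF cY] .
    then have "X \<noteq> V" by blast
    then obtain s z0 where sz: "s \<in> X" "z0 \<in> V - X" "{s, z0} \<in> E"
      using connE[OF cV XV Xne] by blast
    then have sS: "s \<in> S" unfolding S_def by blast
    have "{z0, s} \<in> E" using sz by (simp add: insert_commute)
    then have ci: "conn E (insert s (V - X))" using conn_insert[OF cY _ sz(2)] sz(1) by blast
    have VXs: "V - (X - {s}) = insert s (V - X)" using sz XV by blast
    have T0: "set P \<subseteq> X - {s}" using PX PS sS by blast
    have ci': "conn E (V - (X - {s}))" unfolding VXs by (rule ci)
    have "\<exists>X2. set P \<subseteq> X2 \<and> X2 \<subseteq> X - {s} \<and> conn E X2 \<and> conn E (V - X2)"
      by (rule ext_lemma[OF fin cV T0 _ path_conn[OF Pp] ci']) (use XV in blast)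
    then obtain X2 where X2: "set P \<subseteq> X2" "X2 \<subseteq> X - {s}" "conn E X2" "conn E (V - X2)"
      by blast
    have "good V E X2"
      unfolding good_def
    proof (intro conjI allI impI)
      show "X2 \<subseteq> V" using X2 XV by blast
      show "conn E X2" "conn E (V - X2)" using X2 by blast+
      fix Q assume "longest_path V E Q"
      then have "set Q \<inter> set P \<noteq> {}" using intersect[OF cg _ P] by blast
      then show "set Q \<inter> X2 \<noteq> {}" using X2 by blast
    qed
    then have "card X \<le> card X2" by (rule minX)
    moreover have "card X2 < card X"
    proof (rule psubset_card_mono)
      show "finite X" using XV fin finite_subset by blast
      show "X2 \<subset> X" using X2(2) sz(1) by blast
    qed
    ultimately show False by simp
  qed
  have SV: "S \<subseteq> V" using XV unfolding S_def by blast
  define Ls where "Ls = {card S | S. S \<subseteq> V \<and> (\<forall>p. longest_path V E p \<longrightarrow> set p \<inter> S \<noteq> {})}"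
  have finLs: "finite Ls"
  proof (rule finite_subset)
    show "Ls \<subseteq> {..card V}" unfolding Ls_def using card_mono[OF fin] by auto
  qed simp
  have "card S \<in> Ls" unfolding Ls_def using SV trans by blast
  then have l1: "lpt V E \<le> card S" unfolding lpt_def Ls_def[symmetric] using finLs by simp
  define C where "C = edge_cut V E X"
  define f where "f = (\<lambda>a. {a, SOME z. z \<in> V - X \<and> {a, z} \<in> E})"
  have fS: "f a \<in> C \<and> (SOME z. z \<in> V - X \<and> {a, z} \<in> E) \<in> V - X" if "a \<in> S" for a
  proof -
    have "\<exists>z. z \<in> V - X \<and> {a, z} \<in> E" using that unfolding S_def by blast
    then have "(SOME z. z \<in> V - X \<and> {a, z} \<in> E) \<in> V - X \<and> {a, SOME z. z \<in> V - X \<and> {a, z} \<in> E} \<in> E"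
      by (rule someI_ex)
    then show ?thesis using that unfolding f_def C_def edge_cut_def S_def by blast
  qed
  have inj: "inj_on f S"
  proof (rule inj_onI)
    fix a b assume ab: "a \<in> S" "b \<in> S" "f a = f b"
    have "a \<in> X" "b \<in> X" using ab unfolding S_def by blast+
    then show "a = b" using ab(3) fS[OF ab(1)] fS[OF ab(2)] unfolding f_def
      by (auto simp: doubleton_eq_iff)
  qed
  have finC: "finite C" unfolding C_def edge_cut_def using finE by simp
  have l2: "card S \<le> card C"
    by (rule card_inj_on_le[OF inj _ finC]) (use fS in blast)
  have bond: "is_bond V E C" unfolding C_def by (rule bond_lemma[OF sg XV cX cY cV])
  have eqB: "{card C | C. is_bond V E C} = card ` {C. is_bond V E C}" by blast
  have "{C. is_bond V E C} \<subseteq> Pow E"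
    unfolding is_bond_def is_edge_cut_def edge_cut_def by blast
  then have "finite {C. is_bond V E C}" using finE by (meson finite_Pow_iff finite_subset)
  then have l3: "card C \<le> Max {card C | C. is_bond V E C}"
    unfolding eqB using bond by (intro Max_ge) auto
  show ?thesis using l1 l2 l3 by linarith
qed

end
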